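(* For all positive integers $m,n$, the posets $\mathcal P(m,n)$ and $\mathcal P(n,m)$ are isomorphic.
   Context: $\mathcal P(m,n)$ is the poset whose elements are the monomials of degree $m$ in $K[x_0,\dots,x_n]$, with partial order $\ge_B$ generated (as the reflexive-transitive closure) by the covering relation: $\mathbf x^A\succ_B\mathbf x^B$ iff there is $i<n$ with $\mathbf x^A=\frac{x_i}{x_{i+1}}\mathbf x^B$. *)

theory Defs
  imports Main
begin

(* Monomials of degree m in K[x_0,...,x_n], represented by exponent vectors
  a :: nat => nat with a i = 0 for i > n and a_0 + ... + a_n = m. *)
definition monoms :: "nat \<Rightarrow> nat \<Rightarrow> (nat \<Rightarrow> nat) set" where
  "monoms m n = {a. (\<forall>i>n. a i = 0) \<and> (\<Sum>i\<le>n. a i) = m}"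

(* Covering relation: x^A covers x^B iff x^A = (x_i / x_(i+1)) x^B for some i < n. *)
definition coverB :: "nat \<Rightarrow> (nat \<Rightarrow> nat) \<Rightarrow> (nat \<Rightarrow> nat) \<Rightarrow> bool" where
  "coverB n A B \<longleftrightarrow> (\<exists>i<n. 1 \<le> B (Suc i) \<and>
      A = B(i := B i + 1, Suc i := B (Suc i) - 1))"

definition geB :: "nat \<Rightarrow> nat \<Rightarrow> (nat \<Rightarrow> nat) \<Rightarrow> (nat \<Rightarrow> nat) \<Rightarrow> bool" where
  "geB m n = (\<lambda>A B. A \<in> monoms m n \<and> B \<in> monoms m n \<and> coverB n A B)\<^sup>*\<^sup>*"

end

theory Submission
  imports Defs
begin

definition cs :: "(nat \<Rightarrow> nat) \<Rightarrow> nat \<Rightarrow> nat" where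
  "cs a j = (\<Sum>i\<le>j. a i)"

definition gS :: "nat \<Rightarrow> (nat \<Rightarrow> nat) \<Rightarrow> nat \<Rightarrow> nat" where
  "gS n a = (\<lambda>j. if j \<le> n then cs a j else 0)"

definition MonoS :: "nat \<Rightarrow> nat \<Rightarrow> (nat \<Rightarrow> nat) set" where
  "MonoS m n = {s. (\<forall>i j. i \<le> j \<longrightarrow> j \<le> n \<longrightarrow> s i \<le> s j) \<and> s n = m \<and> (\<forall>j>n. s j = 0)}"

definition ginv :: "nat \<Rightarrow> (nat \<Rightarrow> nat) \<Rightarrow> nat \<Rightarrow> nat" where
  "ginv n s = (\<lambda>i. if n < i then 0 else s i - (if i = 0 then 0 else s (i - 1)))"

definition conj :: "nat \<Rightarrow> nat \<Rightarrow> (nat \<Rightarrow> nat) \<Rightarrow> nat \<Rightarrow> nat" where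
  "conj m n s = (\<lambda>k. if k \<le> m then card {j. j < n \<and> m - k \<le> s j} else 0)"

lemma cs_0[simp]: "cs a 0 = a 0" by (simp add: cs_def)
lemma cs_Suc[simp]: "cs a (Suc j) = cs a j + a (Suc j)" by (simp add: cs_def)

lemma cs_mono: "i \<le> j \<Longrightarrow> cs a i \<le> cs a j"
  unfolding cs_def by (rule sum_mono2) auto

lemma cs_upd:
  assumes "1 \<le> Y (Suc i)"
  shows "cs (Y(i := Y i + 1, Suc i := Y (Suc i) - 1)) j = (if j = i then cs Y j + 1 else cs Y j)"
  using assms by (induction j) auto

lemma gS_in: assumes "a \<in> monoms m n" shows "gS n a \<in> MonoS m n"
  using assms unfolding MonoS_def gS_def monoms_def
  using cs_mono unfolding cs_def by auto

lemma cs_ginv: assumes "s \<in> MonoS m n" "j \<le> n" shows "cs (ginv n s) j = s j"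
  using assms(2)
proof (induction j)
  case 0 then show ?case by (simp add: ginv_def)
next
  case (Suc j)
  have "s j \<le> s (Suc j)" using assms(1) Suc.prems unfolding MonoS_def by auto
  then show ?case using Suc by (simp add: ginv_def)
qed

lemma ginv_in: assumes "s \<in> MonoS m n" shows "ginv n s \<in> monoms m n" "gS n (ginv n s) = s"
proof -
  have "cs (ginv n s) n = m" using cs_ginv[OF assms, of n] assms by (simp add: MonoS_def)
  then show "ginv n s \<in> monoms m n" unfolding monoms_def cs_def by (auto simp: ginv_def)
  show "gS n (ginv n s) = s"
    using assms cs_ginv[OF assms] by (auto simp: gS_def MonoS_def fun_eq_iff)
qed

lemma ginv_gS: assumes "a \<in> monoms m n" shows "ginv n (gS n a) = a"
proof
  fix i show "ginv n (gS n a) i = a i"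
    using assms by (cases i) (auto simp: ginv_def gS_def monoms_def)
qed

lemma upclosed_card:
  assumes up: "\<And>j j'. P j \<Longrightarrow> j \<le> j' \<Longrightarrow> j' < n \<Longrightarrow> P j'" and "j < n"
  shows "P j \<longleftrightarrow> n - j \<le> card {j'. j' < n \<and> P j'}"
proof
  assume "P j"
  then have "{j..<n} \<subseteq> {j'. j' < n \<and> P j'}" using up by auto
  then have "card {j..<n} \<le> card {j'. j' < n \<and> P j'}" by (rule card_mono[rotated]) auto
  then show "n - j \<le> card {j'. j' < n \<and> P j'}" by simp
next
  assume h: "n - j \<le> card {j'. j' < n \<and> P j'}"
  show "P j"
  proof (rule ccontr)
    assume "\<not> P j"
    have "{j'. j' < n \<and> P j'} \<subseteq> {Suc j..<n}"
    proof
      fix x assume "x \<in> {j'. j' < n \<and> P j'}"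
      then have "x < n" "P x" by auto
      have "\<not> x \<le> j" using up[OF \<open>P x\<close> _ \<open>j < n\<close>] \<open>\<not> P j\<close> by blast
      then show "x \<in> {Suc j..<n}" using \<open>x < n\<close> by simp
    qed
    then have "card {j'. j' < n \<and> P j'} \<le> card {Suc j..<n}" by (rule card_mono[rotated]) auto
    then show False using h \<open>j < n\<close> by simp
  qed
qed

lemma conj_in: assumes "s \<in> MonoS m n" shows "conj m n s \<in> MonoS n m"
proof -
  have "card {j. j < n \<and> m - i \<le> s j} \<le> card {j. j < n \<and> m - j' \<le> s j}" if "i \<le> j'" for i j'
    by (rule card_mono) (use that in auto)
  then show ?thesis unfolding MonoS_def conj_def by auto
qed

lemma conj_conj: assumes s: "s \<in> MonoS m n" shows "conj n m (conj m n s) = s"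
proof
  fix j
  have mono: "\<And>i j. i \<le> j \<Longrightarrow> j \<le> n \<Longrightarrow> s i \<le> s j" and sn: "s n = m" and z: "\<And>j. j > n \<Longrightarrow> s j = 0"
    using s unfolding MonoS_def by auto
  show "conj n m (conj m n s) j = s j"
  proof (cases "j < n")
    case True
    have sj: "s j \<le> m" using mono[of j n] True sn by simp
    have "{k. k < m \<and> n - j \<le> conj m n s k} = {k. k < m \<and> m - k \<le> s j}"
    proof -
      have "n - j \<le> conj m n s k \<longleftrightarrow> m - k \<le> s j" if "k < m" for k
      proof -
        have "conj m n s k = card {j'. j' < n \<and> m - k \<le> s j'}" using that by (simp add: conj_def)
        moreover have "m - k \<le> s j \<longleftrightarrow> n - j \<le> card {j'. j' < n \<and> m - k \<le> s j'}"
          by (rule upclosed_card[OF _ True]) (use mono in fastforce)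
        ultimately show ?thesis by simp
      qed
      then show ?thesis by auto
    qed
    also have "\<dots> = {m - s j..<m}" using sj by auto
    finally show ?thesis using True sj by (simp add: conj_def)
  next
    case False
    then show ?thesis using sn z by (cases "j = n") (auto simp: conj_def)
  qed
qed

lemma conj_le: assumes "s \<le> s'" shows "conj m n s \<le> conj m n s'"
proof (rule le_funI)
  fix k
  show "conj m n s k \<le> conj m n s' k" unfolding conj_def
    using assms by (auto intro!: card_mono dest: le_funD order_trans)
qed


lemma cover_le: assumes "coverB n y z" shows "gS n z \<le> gS n y"
proof -
  obtain i where "1 \<le> z (Suc i)" "y = z(i := z i + 1, Suc i := z (Suc i) - 1)"
    using assms unfolding coverB_def by blast
  then show ?thesis using cs_upd[of z i] by (auto simp: le_fun_def gS_def)
qed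

lemma geB_imp: assumes "geB m n A B" shows "gS n B \<le> gS n A"
  using assms unfolding geB_def
proof (induction rule: rtranclp_induct)
  case base then show ?case by simp
next
  case (step y z)
  then show ?case using cover_le[of n y z] by (meson order_trans)
qed

lemma imp_geB:
  assumes A: "A \<in> monoms m n"
  shows "B \<in> monoms m n \<Longrightarrow> gS n B \<le> gS n A \<Longrightarrow> geB m n A B"
proof (induction "\<Sum>j\<le>n. gS n A j - gS n B j" arbitrary: B rule: less_induct)
  case less
  show ?case
  proof (cases "gS n B = gS n A")
    case True
    then have "B = A" using ginv_gS[OF A] ginv_gS[OF less.prems(1)] by metis
    then show ?thesis by (simp add: geB_def)
  next
    case False
    then obtain j0 where j0: "gS n B j0 < gS n A j0"
      using less.prems(2) by (metis le_funD antisym_conv1 ext)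
    define S where "S = {j. j \<le> n \<and> gS n B j < gS n A j}"
    have fin: "finite S" unfolding S_def by auto
    have "j0 \<in> S" using j0 unfolding S_def gS_def by (auto split: if_splits)
    define J where "J = Max S"
    have JS: "J \<in> S" using fin \<open>j0 \<in> S\<close> unfolding J_def using Max_in by blast
    have Jmax: "\<And>j. j \<in> S \<Longrightarrow> j \<le> J" using fin unfolding J_def by simp
    have An: "gS n A n = m" and Bn: "gS n B n = m"
      using A less.prems(1) by (auto simp: gS_def monoms_def cs_def)
    have "J \<le> n" using JS S_def by auto
    have "J \<noteq> n" using JS An Bn unfolding S_def by auto
    then have Jn: "J < n" using \<open>J \<le> n\<close> by simp
    have "Suc J \<notin> S" using Jmax by fastforce
    then have "gS n A (Suc J) \<le> gS n B (Suc J)" using Jn unfolding S_def by auto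
    moreover have "gS n A J \<le> gS n A (Suc J)" using Jn by (simp add: gS_def)
    moreover have "gS n B J < gS n A J" using JS S_def by auto
    ultimately have "cs B J < cs B (Suc J)" using Jn by (simp add: gS_def)
    then have b1: "1 \<le> B (Suc J)" by simp
    define B' where "B' = B(J := B J + 1, Suc J := B (Suc J) - 1)"
    have cu: "\<And>j. cs B' j = (if j = J then cs B j + 1 else cs B j)"
      unfolding B'_def by (rule cs_upd[of B J, OF b1])
    have gB': "gS n B' = (\<lambda>j. if j = J then gS n B j + 1 else gS n B j)"
      using Jn unfolding gS_def by (auto simp: cu fun_eq_iff)
    have B'm: "B' \<in> monoms m n"
    proof -
      have "cs B' n = cs B n" using Jn by (simp add: cu)
      then show ?thesis using less.prems(1) Jn unfolding monoms_def cs_def by (auto simp: B'_def)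
    qed
    have le': "gS n B' \<le> gS n A" using less.prems(2) JS unfolding gB' S_def
      by (auto simp: le_fun_def Suc_le_eq)
    have "(\<Sum>j\<le>n. gS n A j - gS n B' j) < (\<Sum>j\<le>n. gS n A j - gS n B j)"
    proof (rule sum_strict_mono_ex1)
      show "finite {..n}" by simp
      show "\<forall>x\<in>{..n}. gS n A x - gS n B' x \<le> gS n A x - gS n B x" unfolding gB' by auto
      show "\<exists>x\<in>{..n}. gS n A x - gS n B' x < gS n A x - gS n B x"
        using JS \<open>J \<le> n\<close> unfolding gB' S_def by (intro bexI[of _ J]) auto
    qed
    then have "geB m n A B'" using less.hyps B'm le' by blast
    moreover have "coverB n B' B" unfolding coverB_def B'_def using Jn b1 by blast
    ultimately show ?thesis using B'm less.prems(1) unfolding geB_def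
      by (simp add: rtranclp.rtrancl_into_rtrancl)
  qed
qed

lemma geB_iff: "A \<in> monoms m n \<Longrightarrow> B \<in> monoms m n \<Longrightarrow> geB m n A B \<longleftrightarrow> gS n B \<le> gS n A"
  using geB_imp imp_geB by blast

theorem mainTheorem3:
  fixes m n :: nat
  assumes "0 < m" and "0 < n"
  shows "\<exists>f. bij_betw f (monoms m n) (monoms n m) \<and>
           (\<forall>A\<in>monoms m n. \<forall>B\<in>monoms m n. geB m n A B \<longleftrightarrow> geB n m (f A) (f B))"
proof -
  define f where "f = (\<lambda>a. ginv m (conj m n (gS n a)))"
  define f' where "f' = (\<lambda>a. ginv n (conj n m (gS m a)))"
  have gf: "gS m (f a) = conj m n (gS n a)" if "a \<in> monoms m n" for a
    unfolding f_def using ginv_in(2)[OF conj_in[OF gS_in[OF that]]] .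
  have fin: "f a \<in> monoms n m" if "a \<in> monoms m n" for a
    unfolding f_def using ginv_in(1)[OF conj_in[OF gS_in[OF that]]] .
  have f'in: "f' a \<in> monoms m n" if "a \<in> monoms n m" for a
    unfolding f'_def using ginv_in(1)[OF conj_in[OF gS_in[OF that]]] .
  have ff': "f' (f a) = a" if "a \<in> monoms m n" for a
    unfolding f'_def using gf[OF that] conj_conj[OF gS_in[OF that]] ginv_gS[OF that] by simp
  have f'f: "f (f' a) = a" if "a \<in> monoms n m" for a
  proof -
    have "gS n (f' a) = conj n m (gS m a)"
      unfolding f'_def using ginv_in(2)[OF conj_in[OF gS_in[OF that]]] .
    then show ?thesis unfolding f_def using conj_conj[OF gS_in[OF that]] ginv_gS[OF that] by simp
  qed
  have bij: "bij_betw f (monoms m n) (monoms n m)"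
    by (rule bij_betw_byWitness[where f'=f']) (use ff' f'f fin f'in in auto)
  have ord: "geB m n A B \<longleftrightarrow> geB n m (f A) (f B)" if A: "A \<in> monoms m n" and B: "B \<in> monoms m n" for A B
  proof -
    have "geB m n A B \<longleftrightarrow> gS n B \<le> gS n A" using geB_iff A B by blast
    also have "\<dots> \<longleftrightarrow> conj m n (gS n B) \<le> conj m n (gS n A)"
    proof
      assume "gS n B \<le> gS n A" then show "conj m n (gS n B) \<le> conj m n (gS n A)" by (rule conj_le)
    next
      assume "conj m n (gS n B) \<le> conj m n (gS n A)"
      then have "conj n m (conj m n (gS n B)) \<le> conj n m (conj m n (gS n A))" by (rule conj_le)
      then show "gS n B \<le> gS n A" using conj_conj[OF gS_in[OF A]] conj_conj[OF gS_in[OF B]] by simp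
    qed
    also have "\<dots> \<longleftrightarrow> geB n m (f A) (f B)" using geB_iff[OF fin[OF A] fin[OF B]] gf[OF A] gf[OF B] by simp
    finally show ?thesis .
  qed
  show ?thesis using bij ord by blast
qed

end
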